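(* Let $X$ be an $n$-valued group and let $S$ and $S'$ be finite generating sets of $X$. Let $y,y'\in X$. Denote by $B(x,r)$ and $B'(x,r)$ the balls of radius $r$ centred at $x$ with respect to $S$ and $S'$ respectively. Then there is a constant $C>0$ such that for all $r\ge 1$ $$|B(y,C^{-1}r)|\le |B'(y',r)|\le |B(y,Cr)|.$$
   Context: For a set $X$, $\operatorname{Sym}^n X=X^n/S_n$ is the set of $n$-multi-sets (unordered $n$-tuples with multiplicities) of elements of $X$. An $n$-valued multiplication on $X$ is a map $X\times X\to \operatorname{Sym}^nX$, $(x,y)\mapsto x*y=[(x*y)_1,\dots,(x*y)_n]$; it is extended to multi-sets by multiplying elementwise and collecting all results with multiplicity. An $n$-valued group is a set $X$ with such a multiplication satisfying: (associativity) the $n^2$-multi-sets $[x*(y*z)_1,\dots,x*(y*z)_n]$ and $[(x*y)_1*z,\dots,(x*y)_n*z]$ coincide for all $x,y,z$; (unit) there is $e\in X$ with $e*x=x*e=[x,\dots,x]$ for all $x$; (inverse) there is a map $\operatorname{inv}:X\to X$ with $e\in \operatorname{inv}(x)*x$ and $e\in x*\operatorname{inv}(x)$ for all $x$. For a multi-set $M$, $\operatorname{Set}(M)$ denotes the set of distinct elements of $M$. A subset $S\subseteq X$ generates $X$ if every element of $X$ lies in $\operatorname{Set}(s_1*\dots*s_m)$ for some $s_i\in S$. The ball of radius $r\ge0$ centred at $x\in X$ with respect to $S$ is $B(x,r)=\{y\in X:\exists m\in\mathbb{Z}_{\ge0},\ m\le r,\ \exists s_{i_1},\dots,s_{i_m}\in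 S,\ y\in \operatorname{Set}(x*s_{i_1}*\dots*s_{i_m})\}$ (for $m=0$ this gives $x$ itself). *)

theory Defs
  imports Complex_Main "HOL-Library.Multiset"
begin

definition mmul :: "('a \<Rightarrow> 'a \<Rightarrow> 'a multiset) \<Rightarrow> 'a multiset \<Rightarrow> 'a multiset \<Rightarrow> 'a multiset" where
  "mmul m M N = sum_mset (image_mset (\<lambda>x. sum_mset (image_mset (\<lambda>y. m x y) N)) M)"

definition nvalued_group :: "nat \<Rightarrow> ('a \<Rightarrow> 'a \<Rightarrow> 'a multiset) \<Rightarrow> bool" where
  "nvalued_group n m \<longleftrightarrow>
     (\<forall>x y. size (m x y) = n) \<and>
     (\<forall>x y z. mmul m {#x#} (m y z) = mmul m (m x y) {#z#}) \<and>
     (\<exists>e. (\<forall>x. m e x = replicate_mset n x \<and> m x e = replicate_mset n x) \<and>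
          (\<exists>inv. \<forall>x. e \<in># m (inv x) x \<and> e \<in># m x (inv x)))"

fun mprod :: "('a \<Rightarrow> 'a \<Rightarrow> 'a multiset) \<Rightarrow> 'a multiset \<Rightarrow> 'a list \<Rightarrow> 'a multiset" where
  "mprod m M [] = M"
| "mprod m M (s # ss) = mprod m (mmul m M {#s#}) ss"

definition generates :: "('a \<Rightarrow> 'a \<Rightarrow> 'a multiset) \<Rightarrow> 'a set \<Rightarrow> bool" where
  "generates m S \<longleftrightarrow>
     (\<forall>x. \<exists>s ss. set (s # ss) \<subseteq> S \<and> x \<in># mprod m {#s#} ss)"

definition ball_nv :: "('a \<Rightarrow> 'a \<Rightarrow> 'a multiset) \<Rightarrow> 'a set \<Rightarrow> 'a \<Rightarrow> real \<Rightarrow> 'a set" where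
  "ball_nv m S x r = {y. \<exists>ss. real (length ss) \<le> r \<and> set ss \<subseteq> S \<and> y \<in># mprod m {#x#} ss}"

end

theory Submission
  imports Defs
begin

lemma mmul_add_left: "mmul m (M + M') N = mmul m M N + mmul m M' N"
  by (simp add: mmul_def)

lemma mmul_empty_left[simp]: "mmul m {#} N = {#}"
  by (simp add: mmul_def)

lemma mmul_empty_right[simp]: "mmul m M {#} = {#}"
  by (simp add: mmul_def)

lemma mmul_add_right: "mmul m M (N + N') = mmul m M N + mmul m M N'"
  by (induction M) (simp_all add: mmul_def)

lemma mmul_single[simp]: "mmul m {#x#} {#y#} = m x y"
  by (simp add: mmul_def)

lemma set_mmul: "set_mset (mmul m M N) = (\<Union>x\<in>set_mset M. \<Union>y\<in>set_mset N. set_mset (m x y))"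
  by (simp add: mmul_def)

lemma mmul_assoc:
  assumes A: "\<And>x y z. mmul m {#x#} (m y z) = mmul m (m x y) {#z#}"
  shows "mmul m M (mmul m N P) = mmul m (mmul m M N) P"
proof (induction M)
  case empty then show ?case by simp
next
  case (add x M)
  have "mmul m {#x#} (mmul m N P) = mmul m (mmul m {#x#} N) P"
  proof (induction N)
    case empty then show ?case by simp
  next
    case (add y N)
    have "mmul m {#x#} (mmul m {#y#} P) = mmul m (m x y) P"
    proof (induction P)
      case empty then show ?case by simp
    next
      case (add z P)
      have e: "add_mset z P = {#z#} + P" by simp
      show ?case using add A[of x y z]
        by (simp only: e mmul_add_right mmul_single)
    qed
    then show ?case using add
      by (metis add_mset_add_single mmul_add_left mmul_add_right mmul_single union_commute)
  qed
  then show ?case using add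
    by (metis add_mset_add_single mmul_add_left union_commute)
qed

lemma mprod_append: "mprod m M (ss @ ts) = mprod m (mprod m M ss) ts"
  by (induction ss arbitrary: M) auto

lemma mprod_add: "mprod m (M + M') ss = mprod m M ss + mprod m M' ss"
  by (induction ss arbitrary: M M') (auto simp: mmul_add_left)

lemma set_mprod: "set_mset (mprod m M ss) = (\<Union>a\<in>set_mset M. set_mset (mprod m {#a#} ss))"
proof (induction M)
  case empty
  have "mprod m {#} ss = {#}" by (induction ss) auto
  then show ?case by simp
next
  case (add x M)
  then show ?case by (metis UN_insert add_mset_add_single mprod_add set_mset_add_mset_insert set_mset_union union_commute)
qed

lemma mmul_mprod:
  assumes A: "\<And>x y z. mmul m {#x#} (m y z) = mmul m (m x y) {#z#}"
  shows "mmul m M (mprod m N ss) = mprod m (mmul m M N) ss"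
  by (induction ss arbitrary: N) (auto simp: mmul_assoc[OF A])



lemma word_subst:
  assumes "\<forall>s\<in>set ws. \<forall>a. set_mset (mprod m {#a#} [s]) \<subseteq> set_mset (mprod m {#a#} (f s))"
  shows "set_mset (mprod m {#a#} ws) \<subseteq> set_mset (mprod m {#a#} (concat (map f ws)))"
  using assms
proof (induction ws arbitrary: a)
  case Nil then show ?case by simp
next
  case (Cons s ws)
  have "set_mset (mprod m {#a#} (s # ws)) = set_mset (mprod m (mprod m {#a#} [s]) ws)"
    by simp
  also have "\<dots> = (\<Union>b\<in>set_mset (mprod m {#a#} [s]). set_mset (mprod m {#b#} ws))"
    by (rule set_mprod)
  also have "\<dots> \<subseteq> (\<Union>b\<in>set_mset (mprod m {#a#} (f s)). set_mset (mprod m {#b#} (concat (map f ws))))"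
    using Cons by fastforce
  also have "\<dots> = set_mset (mprod m (mprod m {#a#} (f s)) (concat (map f ws)))"
    by (rule set_mprod[symmetric])
  also have "\<dots> = set_mset (mprod m {#a#} (concat (map f (s # ws))))"
    by (simp add: mprod_append)
  finally show ?case .
qed

lemma length_concat_bound:
  assumes "\<forall>s\<in>set ws. length (f s) \<le> L"
  shows "length (concat (map f ws)) \<le> L * length ws"
  using assms by (induction ws) auto

lemma ball_sub:
  assumes G: "nvalued_group n m" and fin: "finite S'" and gen: "generates m S"
  shows "\<exists>L d::nat. \<forall>R. ball_nv m S' y' R \<subseteq> ball_nv m S y (real L * R + real d)"
proof -
  have A: "\<And>x y z. mmul m {#x#} (m y z) = mmul m (m x y) {#z#}"
    using G unfolding nvalued_group_def by blast
  obtain e inv where E: "\<And>x. m e x = replicate_mset n x" and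
     I: "\<And>x. e \<in># m (inv x) x \<and> e \<in># m x (inv x)"
    using G unfolding nvalued_group_def by blast
  have sz: "\<And>x y. size (m x y) = n" using G unfolding nvalued_group_def by blast
  have npos: "n > 0"
  proof (rule ccontr)
    assume "\<not> n > 0"
    then have "m (inv y) y = {#}" using sz[of "inv y" y] by simp
    then show False using I[of y] by simp
  qed
  have rep: "\<exists>w. set w \<subseteq> S \<and> (\<forall>a. set_mset (m a z) \<subseteq> set_mset (mprod m {#a#} w))" for z
  proof -
    obtain s0 ss where s: "set (s0 # ss) \<subseteq> S" "z \<in># mprod m {#s0#} ss"
      using gen unfolding generates_def by blast
    have "mprod m {#a#} (s0 # ss) = mmul m {#a#} (mprod m {#s0#} ss)" for a
      by (simp add: mmul_mprod[OF A])
    then have "set_mset (m a z) \<subseteq> set_mset (mprod m {#a#} (s0 # ss))" for a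
      using s(2) by (auto simp: set_mmul)
    then show ?thesis using s(1) by blast
  qed
  then obtain f where f: "\<And>z. set (f z) \<subseteq> S" "\<And>z a. set_mset (m a z) \<subseteq> set_mset (mprod m {#a#} (f z))"
    by metis
  have "y' \<in># m e y'" using E npos by (cases n) auto
  moreover have "set_mset (m e y') \<subseteq> set_mset (mmul m (m y (inv y)) {#y'#})"
    using I[of y] by (auto simp: set_mmul)
  ultimately have "y' \<in> set_mset (mmul m {#y#} (m (inv y) y'))" using A by auto
  then obtain z where "y' \<in># m y z" by (auto simp: set_mmul)
  then have yu: "y' \<in># mprod m {#y#} (f z)" using f(2) by blast
  define u where "u = f z"
  have "finite ((\<lambda>s. length (f s)) ` S')" using fin by simp
  then obtain L where L: "\<forall>s\<in>S'. length (f s) \<le> L"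
    using finite_nat_set_iff_bounded_le by auto
  show ?thesis
  proof (intro exI allI subsetI)
    fix R x assume "x \<in> ball_nv m S' y' R"
    then obtain ws where ws: "real (length ws) \<le> R" "set ws \<subseteq> S'" "x \<in># mprod m {#y'#} ws"
      unfolding ball_nv_def by blast
    have "\<forall>s\<in>set ws. \<forall>a. set_mset (mprod m {#a#} [s]) \<subseteq> set_mset (mprod m {#a#} (f s))"
      using f(2) by simp
    from word_subst[OF this] ws(3)
    have "x \<in># mprod m {#y'#} (concat (map f ws))" by blast
    then have "x \<in> set_mset (mprod m (mprod m {#y#} u) (concat (map f ws)))"
      using yu unfolding u_def by (subst set_mprod) blast
    then have x: "x \<in># mprod m {#y#} (u @ concat (map f ws))"
      by (simp add: mprod_append)
    have len: "length (concat (map f ws)) \<le> L * length ws"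
      using L ws(2) by (intro length_concat_bound) auto
    have "real (length (u @ concat (map f ws))) \<le> real L * real (length ws) + real (length u)"
      using len by (simp add: of_nat_mult[symmetric] del: of_nat_mult)
    also have "\<dots> \<le> real L * R + real (length u)"
      using ws(1) by (simp add: mult_left_mono)
    finally have "real (length (u @ concat (map f ws))) \<le> real L * R + real (length u)" .
    moreover have "set (u @ concat (map f ws)) \<subseteq> S" using f(1) unfolding u_def by auto
    ultimately show "x \<in> ball_nv m S y (real L * R + real (length u))"
      unfolding ball_nv_def using x by blast
  qed
qed

lemma finite_ball: assumes "finite S" shows "finite (ball_nv m S x r)"
proof -
  have "ball_nv m S x r \<subseteq> (\<Union>ss\<in>{ss. set ss \<subseteq> S \<and> length ss \<le> nat \<lfloor>r\<rfloor>}. set_mset (mprod m {#x#} ss))"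
    unfolding ball_nv_def by (auto simp: le_nat_floor)
  moreover have "finite {ss. set ss \<subseteq> S \<and> length ss \<le> nat \<lfloor>r\<rfloor>}"
    using assms by (rule finite_lists_length_le)
  ultimately show ?thesis by (meson finite_UN_I finite_set_mset finite_subset)
qed

lemma ball_mono: "r \<le> r' \<Longrightarrow> ball_nv m S x r \<subseteq> ball_nv m S x r'"
  unfolding ball_nv_def by (auto intro: order_trans)

lemma ball_small: "r < 1 \<Longrightarrow> ball_nv m S x r \<subseteq> {x}"
proof
  fix z assume "r < 1" "z \<in> ball_nv m S x r"
  then obtain ss where h: "real (length ss) \<le> r" "z \<in># mprod m {#x#} ss"
    unfolding ball_nv_def by blast
  then have "real (length ss) < 1" using \<open>r < 1\<close> by linarith
  then have "ss = []" by simp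
  then show "z \<in> {x}" using h by simp
qed

lemma ball_center: "0 \<le> r \<Longrightarrow> x \<in> ball_nv m S x r"
  unfolding ball_nv_def by (auto intro!: exI[of _ "[]"])


theorem mainTheorem1:
  fixes n :: nat and m :: "'a \<Rightarrow> 'a \<Rightarrow> 'a multiset"
    and S S' :: "'a set" and y y' :: 'a
  assumes "nvalued_group n m"
    and "finite S" and "generates m S"
    and "finite S'" and "generates m S'"
  shows "\<exists>C::real. C > 0 \<and> (\<forall>r::real. r \<ge> 1 \<longrightarrow>
           card (ball_nv m S y (r / C)) \<le> card (ball_nv m S' y' r) \<and>
           card (ball_nv m S' y' r) \<le> card (ball_nv m S y (C * r)))"
proof -
  obtain L d :: nat where Ld: "\<And>R. ball_nv m S' y' R \<subseteq> ball_nv m S y (real L * R + real d)"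
    using ball_sub[OF assms(1) assms(4) assms(3), of y' y] by blast
  obtain L' d' :: nat where Ld': "\<And>R. ball_nv m S y R \<subseteq> ball_nv m S' y' (real L' * R + real d')"
    using ball_sub[OF assms(1) assms(2) assms(5), of y y'] by blast
  define C :: real where "C = real L + real d + real L' + real d' + 1"
  have Cpos: "C > 0" unfolding C_def by simp
  show ?thesis
  proof (rule exI[of _ C], intro conjI allI impI)
    show "C > 0" by (rule Cpos)
  next
    fix r :: real assume r: "r \<ge> 1"
    have "real L * r + real d \<le> C * r"
    proof -
      have "real d * 1 \<le> real d * r" using r by (intro mult_left_mono) auto
      moreover have "0 \<le> (real L' + real d' + 1) * r" using r by simp
      moreover have "(real L + real d + real L' + real d' + 1) * r = real L * r + real d * r + (real L' + real d' + 1) * r"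
        by (simp add: ring_distribs)
      ultimately show ?thesis unfolding C_def by linarith
    qed
    then have "ball_nv m S' y' r \<subseteq> ball_nv m S y (C * r)"
      using Ld[of r] ball_mono[of "real L * r + real d" "C * r" m S y] by blast
    then show "card (ball_nv m S' y' r) \<le> card (ball_nv m S y (C * r))"
      by (rule card_mono[OF finite_ball[OF assms(2)]])
  next
    fix r :: real assume r: "r \<ge> 1"
    show "card (ball_nv m S y (r / C)) \<le> card (ball_nv m S' y' r)"
    proof (cases "r / C < 1")
      case True
      then have "card (ball_nv m S y (r / C)) \<le> card {y}"
        using ball_small[of "r / C" m S y] by (intro card_mono) auto
      also have "\<dots> \<le> card (ball_nv m S' y' r)"
      proof -
        have "y' \<in> ball_nv m S' y' r" using r by (intro ball_center) simp
        then have "card (ball_nv m S' y' r) > 0"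
          using finite_ball[OF assms(4)] card_gt_0_iff by blast
        then show ?thesis by simp
      qed
      finally show ?thesis .
    next
      case False
      define R where "R = r / C"
      have R1: "R \<ge> 1" using False R_def by simp
      have rR: "r = C * R" unfolding R_def using Cpos by simp
      have "real L' * R + real d' \<le> r"
      proof -
        have "real d' * 1 \<le> real d' * R" using R1 by (intro mult_left_mono) auto
        moreover have "0 \<le> (real L + real d + 1) * R" using R1 by simp
        moreover have "(real L + real d + real L' + real d' + 1) * R = real L' * R + real d' * R + (real L + real d + 1) * R"
          by (simp add: ring_distribs)
        ultimately show ?thesis unfolding rR C_def by linarith
      qed
      then have "ball_nv m S y (r / C) \<subseteq> ball_nv m S' y' r"
        using Ld'[of R] ball_mono[of "real L' * R + real d'" r m S' y'] unfolding R_def[symmetric] by blast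
      then show ?thesis
        by (rule card_mono[OF finite_ball[OF assms(4)]])
    qed
  qed
qed

end
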